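(* Fix $k,s\in\mathbb{N}$ and let $\omega=\omega(n)\to\infty$ as $n\to\infty$. (i) If $\alpha=\alpha(n)$ is bounded away from $0$, then $\lim_{n\to\infty}P\bigl(|(D_{n,1}^{\alpha})^s+\cdots+(D_{n,n}^{\alpha})^s-\mu_{s,\alpha}n|<\omega\sqrt{n}\bigr)=1$. (ii) $\lim_{n\to\infty}P\bigl(|(D_{n,1}^{\infty})^s+\cdots+(D_{n,n}^{\infty})^s-\mu_{s,\infty}n|<\omega\sqrt{n}\bigr)=1$.
   Context: A $k$-out map on $[n]$ is a map $M:[n]\to[n]^k$; the in-degree of vertex $j$ is the total number of coordinates, over all vertices and all $k$ labels, of the images equal to $j$. For $\alpha\in(0,\infty)$ the random $k$-out map $M_{n,k}^{\alpha}$ has law $P(M_{n,k}^{\alpha}=M)=\prod_{j=1}^n \alpha^{\overline{d_j}}/(\alpha n)^{\overline{kn}}$, with $(d_1,\dots,d_n)$ the in-degree sequence of $M$ and $x^{\overline{y}}=x(x+1)\cdots(x+y-1)$; $M_{n,k}^{\infty}$ is the uniformly random $k$-out map on $[n]$. $(D_{n,1}^{\alpha},\dots,D_{n,n}^{\alpha})$ and $(D_{n,1}^{\infty},\dots,D_{n,n}^{\infty})$ are their in-degree sequences, and $\mu_{s,\alpha}=\mathbb{E}[(D_{n,j}^{\alpha})^s]$, $\mu_{s,\infty}=\mathbb{E}[(D_{n,j}^{\infty})^s]$ (independent of $j$). *)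

theory Defs
  imports "HOL-Probability.Probability"
begin

text \<open>Vertices of [n] are encoded as 0..n-1 and labels of a k-out map as 0..k-1.
A k-out map M : [n] -> [n]^k is encoded as an extensional function on
{0..<n} x {0..<k} (pair (i,l) = l-th coordinate of the image of vertex i).\<close>

definition kout_maps :: "nat \<Rightarrow> nat \<Rightarrow> (nat \<times> nat \<Rightarrow> nat) set" where
  "kout_maps n k = ({0..<n} \<times> {0..<k}) \<rightarrow>\<^sub>E {0..<n}"

definition indeg :: "nat \<Rightarrow> nat \<Rightarrow> (nat \<times> nat \<Rightarrow> nat) \<Rightarrow> nat \<Rightarrow> nat" where
  "indeg n k M j = card {p \<in> {0..<n} \<times> {0..<k}. M p = j}"

definition kout_weight :: "real \<Rightarrow> nat \<Rightarrow> nat \<Rightarrow> (nat \<times> nat \<Rightarrow> nat) \<Rightarrow> real" where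
  "kout_weight \<alpha> n k M =
     (\<Prod>j<n. pochhammer \<alpha> (indeg n k M j)) / pochhammer (\<alpha> * real n) (k * n)"

definition prob_alpha :: "real \<Rightarrow> nat \<Rightarrow> nat \<Rightarrow> ((nat \<times> nat \<Rightarrow> nat) \<Rightarrow> bool) \<Rightarrow> real" where
  "prob_alpha \<alpha> n k E = (\<Sum>M\<in>{M \<in> kout_maps n k. E M}. kout_weight \<alpha> n k M)"

text \<open>mu_{s,alpha} = E[(D^alpha_{n,j})^s], taken at vertex j = 1 (encoded 0).\<close>
definition mu_alpha :: "real \<Rightarrow> nat \<Rightarrow> nat \<Rightarrow> nat \<Rightarrow> real" where
  "mu_alpha \<alpha> n k s = (\<Sum>M\<in>kout_maps n k. kout_weight \<alpha> n k M * real (indeg n k M 0) ^ s)"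

definition unif_kout :: "nat \<Rightarrow> nat \<Rightarrow> (nat \<times> nat \<Rightarrow> nat) pmf" where
  "unif_kout n k = pmf_of_set (kout_maps n k)"

definition mu_inf :: "nat \<Rightarrow> nat \<Rightarrow> nat \<Rightarrow> real" where
  "mu_inf n k s = measure_pmf.expectation (unif_kout n k) (\<lambda>M. real (indeg n k M 0) ^ s)"

end

theory Submission
  imports Defs
begin



definition Pos :: "nat \<Rightarrow> nat \<Rightarrow> (nat \<times> nat) set" where
  "Pos n k = {0..<n} \<times> {0..<k}"

definition gp :: "real \<Rightarrow> real \<Rightarrow> nat \<Rightarrow> real" where
  "gp x e d = (\<Prod>i<d. x + e * real i)"

lemma gp_0[simp]: "gp x e 0 = 1" by (simp add: gp_def)
lemma gp_Suc: "gp x e (Suc d) = gp x e d * (x + e * real d)"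
  by (simp add: gp_def)
lemma gp_pos: "x > 0 \<Longrightarrow> e \<ge> 0 \<Longrightarrow> gp x e d > 0"
  unfolding gp_def by (intro prod_pos) (auto intro: add_pos_nonneg)

lemma gp_add_ge: assumes "x > 0" "e \<ge> 0"
  shows "gp x e (a + b) \<ge> gp x e a * gp x e b"
proof (induction b)
  case 0 then show ?case by simp
next
  case (Suc b)
  have "gp x e a * gp x e (Suc b) = (gp x e a * gp x e b) * (x + e * real b)"
    by (simp add: gp_Suc)
  also have "\<dots> \<le> gp x e (a + b) * (x + e * real (a + b))"
    using Suc assms gp_pos[OF assms, of a] gp_pos[OF assms, of b] gp_pos[OF assms, of "a+b"]
    by (intro mult_mono) (auto intro!: mult_left_mono add_nonneg_nonneg)
  finally show ?case by (simp add: gp_Suc)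
qed

definition ww :: "nat \<Rightarrow> nat \<Rightarrow> real \<Rightarrow> real \<Rightarrow> (nat \<times> nat \<Rightarrow> nat) \<Rightarrow> real" where
  "ww n k \<alpha> e M = (\<Prod>j<n. gp \<alpha> e (indeg n k M j)) / gp (\<alpha> * real n) e (k * n)"

definition FF :: "nat \<Rightarrow> nat \<Rightarrow> real \<Rightarrow> real \<Rightarrow> (nat \<times> nat) set \<Rightarrow> (nat \<times> nat \<Rightarrow> nat) \<Rightarrow> real" where
  "FF n k \<alpha> e A g = (\<Prod>j<n. gp \<alpha> e (card {p\<in>A. g p = j})) / gp (\<alpha> * real n) e (card A)"

lemma finite_Pos[simp]: "finite (Pos n k)" by (simp add: Pos_def)
lemma card_Pos: "card (Pos n k) = k * n" by (simp add: Pos_def card_cartesian_product)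
lemma finite_KM[simp]: "finite (kout_maps n k)"
  by (simp add: kout_maps_def finite_PiE)
lemma KM_Pos: "M \<in> kout_maps n k \<Longrightarrow> p \<in> Pos n k \<Longrightarrow> M p < n"
  by (auto simp: kout_maps_def Pos_def PiE_def Pi_def)
lemma KM_eq: "kout_maps n k = Pos n k \<rightarrow>\<^sub>E {0..<n}"
  by (simp add: kout_maps_def Pos_def)

lemma card_fibers: fixes n :: nat assumes "finite A" "\<forall>p\<in>A. g p < n"
  shows "(\<Sum>v<n. card {p\<in>A. g p = v}) = card A"
proof -
  have "(\<Sum>v\<in>{..<n}. (\<Sum>p\<in>{x. x \<in> A \<and> g x = v}. (1::nat))) = (\<Sum>p\<in>A. 1)"
    by (rule sum.group) (use assms in auto)
  then show ?thesis by simp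
qed

context
  fixes n k :: nat and \<alpha> e :: real
  assumes npos: "n > 0" and apos: "\<alpha> > 0" and enn: "e \<ge> 0"
begin

lemma gpn_pos: "gp (\<alpha> * real n) e d > 0"
  using npos apos enn by (intro gp_pos) auto

lemma FF_step:
  assumes fin: "finite A" and q: "q \<notin> A" and g: "\<forall>p\<in>A. g p < n"
  shows "(\<Sum>v<n. FF n k \<alpha> e (insert q A) (g(q:=v))) = FF n k \<alpha> e A g"
proof -
  define d where "d j = card {p\<in>A. g p = j}" for j
  have cd: "card {p\<in>insert q A. (g(q:=v)) p = j} = d j + (if j = v then 1 else 0)" for v j
  proof -
    have "{p\<in>insert q A. (g(q:=v)) p = j} = (if v = j then insert q {p\<in>A. g p = j} else {p\<in>A. g p = j})"
      using q by auto
    then show ?thesis using q fin by (auto simp: d_def)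
  qed
  have prod_eq: "(\<Prod>j<n. gp \<alpha> e (card {p\<in>insert q A. (g(q:=v)) p = j}))
      = (\<Prod>j<n. gp \<alpha> e (d j)) * (\<alpha> + e * real (d v))" if "v < n" for v
  proof -
    have "(\<Prod>j<n. gp \<alpha> e (card {p\<in>insert q A. (g(q:=v)) p = j}))
        = (\<Prod>j<n. gp \<alpha> e (d j) * (if j = v then \<alpha> + e * real (d j) else 1))"
      by (intro prod.cong refl) (simp only: cd, simp add: gp_Suc)
    also have "\<dots> = (\<Prod>j<n. gp \<alpha> e (d j)) * (\<Prod>j<n. (if j = v then \<alpha> + e * real (d j) else 1))"
      by (rule prod.distrib)
    also have "\<dots> = (\<Prod>j<n. gp \<alpha> e (d j)) * (\<alpha> + e * real (d v))"
      using that by simp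
    finally show ?thesis .
  qed
  have cA: "card (insert q A) = Suc (card A)" using fin q by simp
  define P where "P = (\<Prod>j<n. gp \<alpha> e (d j))"
  define Q where "Q = gp (\<alpha> * real n) e (card A)"
  have Qpos: "Q > 0" unfolding Q_def by (rule gpn_pos)
  have den: "\<alpha> * real n + e * real (card A) > 0"
    using npos apos enn by (intro add_pos_nonneg) auto
  have "(\<Sum>v<n. FF n k \<alpha> e (insert q A) (g(q:=v)))
      = (\<Sum>v<n. P * (\<alpha> + e * real (d v)) / (Q * (\<alpha> * real n + e * real (card A))))"
  proof (intro sum.cong refl)
    fix v assume "v \<in> {..<n}"
    then have v: "v < n" by simp
    show "FF n k \<alpha> e (insert q A) (g(q:=v)) = P * (\<alpha> + e * real (d v)) / (Q * (\<alpha> * real n + e * real (card A)))"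
      unfolding FF_def prod_eq[OF v] cA gp_Suc P_def Q_def by simp
  qed
  also have "\<dots> = P * (\<Sum>v<n. (\<alpha> + e * real (d v))) / (Q * (\<alpha> * real n + e * real (card A)))"
    by (simp add: sum_divide_distrib sum_distrib_left)
  also have "(\<Sum>v<n. (\<alpha> + e * real (d v))) = \<alpha> * real n + e * real (card A)"
  proof -
    have "(\<Sum>v<n. real (d v)) = real (card A)"
      using card_fibers[OF fin g] unfolding d_def by (metis of_nat_sum)
    then show ?thesis by (simp add: sum.distrib sum_distrib_left[symmetric] mult.commute)
  qed
  also have "P * (\<alpha> * real n + e * real (card A)) / (Q * (\<alpha> * real n + e * real (card A))) = P / Q"
    using den by (intro mult_divide_mult_cancel_right) simp
  also have "P / Q = FF n k \<alpha> e A g" by (simp add: FF_def P_def Q_def d_def)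
  finally show ?thesis .
qed

lemma marginal_aux:
  "\<forall>A g. A \<subseteq> Pos n k \<and> (\<forall>p\<in>A. g p < n) \<and> card (Pos n k - A) = m \<longrightarrow>
     (\<Sum>M\<in>{M\<in>kout_maps n k. \<forall>p\<in>A. M p = g p}. ww n k \<alpha> e M) = FF n k \<alpha> e A g"
proof (induction m)
  case 0
  show ?case
  proof (intro allI impI, elim conjE)
    fix A g assume A: "A \<subseteq> Pos n k" and g: "\<forall>p\<in>A. g p < n" and c: "card (Pos n k - A) = 0"
    have AP: "A = Pos n k" using A c by auto
    have S: "{M\<in>kout_maps n k. \<forall>p\<in>A. M p = g p} = {restrict g (Pos n k)}"
    proof (safe)
      fix M assume M: "M \<in> kout_maps n k" "\<forall>p\<in>A. M p = g p"
      then have "M = restrict M (Pos n k)" by (simp add: KM_eq)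
      also have "\<dots> = restrict g (Pos n k)" using M AP by (intro restrict_ext) auto
      finally show "M = restrict g (Pos n k)" .
    next
      show "restrict g (Pos n k) \<in> kout_maps n k"
        using g AP by (auto simp: KM_eq restrict_PiE_iff)
    qed (use AP in auto)
    have ind: "indeg n k (restrict g (Pos n k)) j = card {p\<in>A. g p = j}" for j
      unfolding indeg_def AP Pos_def by (intro arg_cong[where f=card]) auto
    show "(\<Sum>M\<in>{M\<in>kout_maps n k. \<forall>p\<in>A. M p = g p}. ww n k \<alpha> e M) = FF n k \<alpha> e A g"
      unfolding S by (simp add: ww_def FF_def ind AP card_Pos)
  qed
next
  case (Suc m)
  show ?case
  proof (intro allI impI, elim conjE)
    fix A g assume A: "A \<subseteq> Pos n k" and g: "\<forall>p\<in>A. g p < n" and c: "card (Pos n k - A) = Suc m"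
    obtain q where q: "q \<in> Pos n k" "q \<notin> A" using c
      by (metis Diff_iff card.empty ex_in_conv nat.distinct(1))
    have finA: "finite A" by (meson A finite_Pos finite_subset)
    have c': "card (Pos n k - insert q A) = m"
      using c q by (metis Diff_insert card_Diff_singleton_if Diff_iff diff_Suc_1)
    have IH: "(\<Sum>M\<in>{M\<in>kout_maps n k. \<forall>p\<in>insert q A. M p = (g(q:=v)) p}. ww n k \<alpha> e M)
        = FF n k \<alpha> e (insert q A) (g(q:=v))" if "v < n" for v
      by (rule Suc.IH[rule_format]) (use A q g that c' in auto)
    define S where "S = {M\<in>kout_maps n k. \<forall>p\<in>A. M p = g p}"
    have "(\<Sum>M\<in>S. ww n k \<alpha> e M) = (\<Sum>v\<in>{..<n}. \<Sum>M\<in>{M. M \<in> S \<and> M q = v}. ww n k \<alpha> e M)"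
      by (rule sum.group[symmetric]) (auto simp: S_def KM_Pos q)
    also have "\<dots> = (\<Sum>v<n. FF n k \<alpha> e (insert q A) (g(q:=v)))"
    proof (intro sum.cong refl)
      fix v assume v: "v \<in> {..<n}"
      have "{M. M \<in> S \<and> M q = v} = {M\<in>kout_maps n k. \<forall>p\<in>insert q A. M p = (g(q:=v)) p}"
        using q by (auto simp: S_def)
      then show "(\<Sum>M\<in>{M. M \<in> S \<and> M q = v}. ww n k \<alpha> e M) = FF n k \<alpha> e (insert q A) (g(q:=v))"
        using IH v by simp
    qed
    also have "\<dots> = FF n k \<alpha> e A g" by (rule FF_step[OF finA q(2) g])
    finally show "(\<Sum>M\<in>{M\<in>kout_maps n k. \<forall>p\<in>A. M p = g p}. ww n k \<alpha> e M) = FF n k \<alpha> e A g"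
      by (simp add: S_def)
  qed
qed

lemma marginal:
  assumes "A \<subseteq> Pos n k" "\<forall>p\<in>A. g p < n"
  shows "(\<Sum>M\<in>{M\<in>kout_maps n k. \<forall>p\<in>A. M p = g p}. ww n k \<alpha> e M) = FF n k \<alpha> e A g"
  using marginal_aux assms by blast

end



definition Ls :: "nat \<Rightarrow> nat \<Rightarrow> nat \<Rightarrow> (nat \<times> nat) list set" where
  "Ls n k m = {w. set w \<subseteq> Pos n k \<and> length w = m}"

lemma finite_Ls[simp]: "finite (Ls n k m)"
  unfolding Ls_def by (rule finite_lists_length_eq) simp

definition ind :: "(nat \<times> nat) set \<Rightarrow> nat \<Rightarrow> (nat \<times> nat \<Rightarrow> nat) \<Rightarrow> real" where
  "ind A j M = (if \<forall>p\<in>A. M p = j then 1 else 0)"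

lemma sum_lists_Suc:
  assumes "finite P"
  shows "(\<Sum>w\<in>{w. set w \<subseteq> P \<and> length w = Suc m}. f w)
       = (\<Sum>x\<in>P. \<Sum>w\<in>{w. set w \<subseteq> P \<and> length w = m}. f (x # w))"
proof -
  have "(\<Sum>w\<in>{w. set w \<subseteq> P \<and> length w = Suc m}. f w)
      = (\<Sum>w\<in>(\<lambda>(xs, n). n#xs) ` ({w. set w \<subseteq> P \<and> length w = m} \<times> P). f w)"
    by (simp only: lists_length_Suc_eq)
  also have "\<dots> = (\<Sum>(xs, x)\<in>{w. set w \<subseteq> P \<and> length w = m} \<times> P. f (x # xs))"
    by (subst sum.reindex[OF inj_split_Cons]) (simp add: case_prod_unfold)
  also have "\<dots> = (\<Sum>xs\<in>{w. set w \<subseteq> P \<and> length w = m}. \<Sum>x\<in>P. f (x # xs))"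
    by (simp add: sum.cartesian_product)
  also have "\<dots> = (\<Sum>x\<in>P. \<Sum>w\<in>{w. set w \<subseteq> P \<and> length w = m}. f (x # w))"
    by (rule sum.swap)
  finally show ?thesis .
qed

lemma power_sum_lists:
  fixes f :: "'a \<Rightarrow> real"
  assumes "finite P"
  shows "(\<Sum>p\<in>P. f p) ^ m = (\<Sum>w\<in>{w. set w \<subseteq> P \<and> length w = m}. prod_list (map f w))"
proof (induction m)
  case 0
  have "{w. set w \<subseteq> P \<and> length w = 0} = {[]}" by auto
  then show ?case by simp
next
  case (Suc m)
  have "(\<Sum>p\<in>P. f p) ^ Suc m = (\<Sum>p\<in>P. f p) * (\<Sum>w\<in>{w. set w \<subseteq> P \<and> length w = m}. prod_list (map f w))"
    using Suc by simp
  also have "\<dots> = (\<Sum>x\<in>P. \<Sum>w\<in>{w. set w \<subseteq> P \<and> length w = m}. f x * prod_list (map f w))"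
    by (simp add: sum_product)
  also have "\<dots> = (\<Sum>w\<in>{w. set w \<subseteq> P \<and> length w = Suc m}. prod_list (map f w))"
    by (simp add: sum_lists_Suc[OF assms])
  finally show ?case .
qed

lemma prod_list_ind: "prod_list (map (\<lambda>p. if M p = j then 1 else (0::real)) w) = ind (set w) j M"
  by (induction w) (auto simp: ind_def)

lemma indeg_power:
  "real (indeg n k M j) ^ s = (\<Sum>w\<in>Ls n k s. ind (set w) j M)"
proof -
  have "real (indeg n k M j) = (\<Sum>p\<in>Pos n k. if M p = j then 1 else (0::real))"
    unfolding indeg_def Pos_def by (simp add: sum.inter_filter[symmetric])
  then show ?thesis
    by (simp add: power_sum_lists Ls_def prod_list_ind)
qed

lemma ww_nonneg: "n > 0 \<Longrightarrow> \<alpha> > 0 \<Longrightarrow> e \<ge> 0 \<Longrightarrow> ww n k \<alpha> e M \<ge> 0"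
  unfolding ww_def using gp_pos[of \<alpha> e] gp_pos[of "\<alpha> * real n" e]
  by (intro divide_nonneg_pos prod_nonneg) (auto intro: less_imp_le)

definition GG :: "nat \<Rightarrow> real \<Rightarrow> real \<Rightarrow> nat \<Rightarrow> real" where
  "GG n \<alpha> e u = gp \<alpha> e u / gp (\<alpha> * real n) e u"

context
  fixes n k :: nat and \<alpha> e :: real
  assumes npos: "n > 0" and apos: "\<alpha> > 0" and enn: "e \<ge> 0"
begin

lemma total: "(\<Sum>M\<in>kout_maps n k. ww n k \<alpha> e M) = 1"
  using marginal[OF npos apos enn, where A="{}" and g="\<lambda>_. 0"] by (simp add: FF_def)

lemma GG_nonneg: "GG n \<alpha> e u \<ge> 0"
  unfolding GG_def using gp_pos[OF apos enn, of u] gpn_pos[OF npos apos enn, of u] by simp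

lemma single:
  assumes A: "A \<subseteq> Pos n k" and j: "j < n"
  shows "(\<Sum>M\<in>{M\<in>kout_maps n k. \<forall>p\<in>A. M p = j}. ww n k \<alpha> e M) = GG n \<alpha> e (card A)"
proof -
  have m: "(\<Sum>M\<in>{M\<in>kout_maps n k. \<forall>p\<in>A. M p = j}. ww n k \<alpha> e M) = FF n k \<alpha> e A (\<lambda>_. j)"
    using marginal[OF npos apos enn A, where g="\<lambda>_. j"] j by simp
  have "(\<Prod>i<n. gp \<alpha> e (card {p\<in>A. j = i})) = (\<Prod>i<n. if j = i then gp \<alpha> e (card A) else 1)"
    by (intro prod.cong refl) auto
  also have "\<dots> = gp \<alpha> e (card A)" using j by simp
  finally have P: "(\<Prod>i<n. gp \<alpha> e (card {p\<in>A. j = i})) = gp \<alpha> e (card A)" .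
  show ?thesis unfolding m FF_def GG_def P ..
qed

lemma two:
  assumes A: "A \<subseteq> Pos n k" and B: "B \<subseteq> Pos n k" and AB: "A \<inter> B = {}"
    and j: "j < n" and j': "j' < n" and jj: "j \<noteq> j'"
  shows "(\<Sum>M\<in>{M\<in>kout_maps n k. (\<forall>p\<in>A. M p = j) \<and> (\<forall>p\<in>B. M p = j')}. ww n k \<alpha> e M)
     = gp \<alpha> e (card A) * gp \<alpha> e (card B) / gp (\<alpha> * real n) e (card A + card B)"
proof -
  define g where "g p = (if p \<in> A then j else j')" for p
  have finA: "finite A" and finB: "finite B" using finite_subset[OF A] finite_subset[OF B] by auto
  have S: "{M\<in>kout_maps n k. (\<forall>p\<in>A. M p = j) \<and> (\<forall>p\<in>B. M p = j')}
      = {M\<in>kout_maps n k. \<forall>p\<in>A \<union> B. M p = g p}"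
    using AB by (auto simp: g_def)
  have m: "(\<Sum>M\<in>{M\<in>kout_maps n k. \<forall>p\<in>A \<union> B. M p = g p}. ww n k \<alpha> e M) = FF n k \<alpha> e (A \<union> B) g"
    using A B j j' by (intro marginal[OF npos apos enn]) (auto simp: g_def)
  have "(\<Prod>i<n. gp \<alpha> e (card {p\<in>A \<union> B. g p = i}))
      = (\<Prod>i<n. (if j = i then gp \<alpha> e (card A) else 1) * (if j' = i then gp \<alpha> e (card B) else 1))"
  proof (intro prod.cong refl)
    fix i
    have "{p\<in>A \<union> B. g p = i} = (if i = j then A else if i = j' then B else {})"
      using AB jj by (auto simp: g_def)
    then show "gp \<alpha> e (card {p\<in>A \<union> B. g p = i})
        = (if j = i then gp \<alpha> e (card A) else 1) * (if j' = i then gp \<alpha> e (card B) else 1)"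
      using jj by auto
  qed
  also have "\<dots> = gp \<alpha> e (card A) * gp \<alpha> e (card B)"
    using j j' by (simp add: prod.distrib)
  finally have P: "(\<Prod>i<n. gp \<alpha> e (card {p\<in>A \<union> B. g p = i})) = gp \<alpha> e (card A) * gp \<alpha> e (card B)" .
  show ?thesis unfolding S m FF_def P using finA finB AB by (simp add: card_Un_disjoint)
qed

lemma two_le:
  "gp \<alpha> e a * gp \<alpha> e b / gp (\<alpha> * real n) e (a + b) \<le> GG n \<alpha> e a * GG n \<alpha> e b"
proof -
  have p1: "gp (\<alpha> * real n) e a > 0" "gp (\<alpha> * real n) e b > 0" "gp \<alpha> e a > 0" "gp \<alpha> e b > 0"
    using gpn_pos[OF npos apos enn] gp_pos[OF apos enn] by auto
  have ge: "gp (\<alpha> * real n) e (a + b) \<ge> gp (\<alpha> * real n) e a * gp (\<alpha> * real n) e b"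
    using npos apos enn by (intro gp_add_ge) auto
  have "gp \<alpha> e a * gp \<alpha> e b / gp (\<alpha> * real n) e (a + b)
      \<le> gp \<alpha> e a * gp \<alpha> e b / (gp (\<alpha> * real n) e a * gp (\<alpha> * real n) e b)"
    using p1 ge gpn_pos[OF npos apos enn, of "a+b"] by (intro divide_left_mono) (auto intro!: mult_pos_pos)
  then show ?thesis by (simp add: GG_def)
qed

lemma E_ind2:
  "(\<Sum>M\<in>kout_maps n k. ww n k \<alpha> e M * (ind A j M * ind B j' M))
   = (\<Sum>M\<in>{M\<in>kout_maps n k. (\<forall>p\<in>A. M p = j) \<and> (\<forall>p\<in>B. M p = j')}. ww n k \<alpha> e M)"
  by (auto simp: sum.inter_filter ind_def intro!: sum.cong)

lemma E_ind:
  "(\<Sum>M\<in>kout_maps n k. ww n k \<alpha> e M * ind A j M)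
   = (\<Sum>M\<in>{M\<in>kout_maps n k. \<forall>p\<in>A. M p = j}. ww n k \<alpha> e M)"
  by (auto simp: sum.inter_filter ind_def intro!: sum.cong)

lemma term_bound:
  assumes A: "A \<subseteq> Pos n k" and B: "B \<subseteq> Pos n k" and j: "j < n" and j': "j' < n"
  shows "(\<Sum>M\<in>kout_maps n k. ww n k \<alpha> e M * (ind A j M * ind B j' M))
        - (\<Sum>M\<in>kout_maps n k. ww n k \<alpha> e M * ind A j M) * (\<Sum>M\<in>kout_maps n k. ww n k \<alpha> e M * ind B j' M)
        \<le> (if j = j' then GG n \<alpha> e (card (A \<union> B)) else 0)"
proof -
  have EA: "(\<Sum>M\<in>kout_maps n k. ww n k \<alpha> e M * ind A j M) = GG n \<alpha> e (card A)"
    using E_ind single[OF A j] by simp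
  have EB: "(\<Sum>M\<in>kout_maps n k. ww n k \<alpha> e M * ind B j' M) = GG n \<alpha> e (card B)"
    using E_ind single[OF B j'] by simp
  have prodnn: "GG n \<alpha> e (card A) * GG n \<alpha> e (card B) \<ge> 0" using GG_nonneg by simp
  show ?thesis
  proof (cases "j = j'")
    case True
    have "{M\<in>kout_maps n k. (\<forall>p\<in>A. M p = j) \<and> (\<forall>p\<in>B. M p = j')} = {M\<in>kout_maps n k. \<forall>p\<in>A \<union> B. M p = j}"
      using True by auto
    then have "(\<Sum>M\<in>kout_maps n k. ww n k \<alpha> e M * (ind A j M * ind B j' M)) = GG n \<alpha> e (card (A \<union> B))"
      using E_ind2 single[of "A \<union> B" j] A B j by simp
    then show ?thesis using True EA EB prodnn by simp
  next
    case False
    show ?thesis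
    proof (cases "A \<inter> B = {}")
      case True
      have "(\<Sum>M\<in>kout_maps n k. ww n k \<alpha> e M * (ind A j M * ind B j' M))
          \<le> GG n \<alpha> e (card A) * GG n \<alpha> e (card B)"
        using E_ind2 two[OF A B True j j' False] two_le by simp
      then show ?thesis using False EA EB by simp
    next
      case nd: False
      have emp: "{M\<in>kout_maps n k. (\<forall>p\<in>A. M p = j) \<and> (\<forall>p\<in>B. M p = j')} = {}"
        using nd False by auto
      have "(\<Sum>M\<in>kout_maps n k. ww n k \<alpha> e M * (ind A j M * ind B j' M)) = 0"
        unfolding E_ind2 emp by simp
      then show ?thesis using False EA EB prodnn by simp
    qed
  qed
qed

end



lemma var_expand:
  fixes w :: "'a \<Rightarrow> real" and Y :: "'i \<Rightarrow> 'a \<Rightarrow> real"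
  assumes S: "finite S" and I: "finite I" and w1: "(\<Sum>x\<in>S. w x) = 1"
  shows "(\<Sum>x\<in>S. w x * ((\<Sum>i\<in>I. Y i x) - (\<Sum>x\<in>S. w x * (\<Sum>i\<in>I. Y i x)))\<^sup>2)
       = (\<Sum>i\<in>I. \<Sum>i'\<in>I. (\<Sum>x\<in>S. w x * (Y i x * Y i' x))
               - (\<Sum>x\<in>S. w x * Y i x) * (\<Sum>x\<in>S. w x * Y i' x))"
proof -
  define Z where "Z x = (\<Sum>i\<in>I. Y i x)" for x
  define \<mu> where "\<mu> = (\<Sum>x\<in>S. w x * Z x)"
  define E where "E i = (\<Sum>x\<in>S. w x * Y i x)" for i
  have "(\<Sum>x\<in>S. w x * (Z x - \<mu>)\<^sup>2) = (\<Sum>x\<in>S. w x * (Z x)\<^sup>2 - 2 * \<mu> * (w x * Z x) + \<mu>\<^sup>2 * w x)"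
    by (intro sum.cong refl) (simp add: power2_eq_square algebra_simps)
  also have "\<dots> = (\<Sum>x\<in>S. w x * (Z x)\<^sup>2) - 2 * \<mu> * \<mu> + \<mu>\<^sup>2 * 1"
    by (simp add: sum.distrib sum_subtractf sum_distrib_left[symmetric] \<mu>_def w1)
  also have "\<dots> = (\<Sum>x\<in>S. w x * (Z x)\<^sup>2) - \<mu>\<^sup>2" by (simp add: power2_eq_square)
  also have "(\<Sum>x\<in>S. w x * (Z x)\<^sup>2) = (\<Sum>i\<in>I. \<Sum>i'\<in>I. \<Sum>x\<in>S. w x * (Y i x * Y i' x))"
  proof -
    have "(\<Sum>x\<in>S. w x * (Z x)\<^sup>2) = (\<Sum>x\<in>S. \<Sum>i\<in>I. \<Sum>i'\<in>I. w x * (Y i x * Y i' x))"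
    proof (intro sum.cong refl)
      fix x
      have "(Z x)\<^sup>2 = (\<Sum>i\<in>I. \<Sum>i'\<in>I. Y i x * Y i' x)"
        unfolding Z_def power2_eq_square by (rule sum_product)
      then show "w x * (Z x)\<^sup>2 = (\<Sum>i\<in>I. \<Sum>i'\<in>I. w x * (Y i x * Y i' x))"
        by (simp add: sum_distrib_left)
    qed
    also have "\<dots> = (\<Sum>i\<in>I. \<Sum>x\<in>S. \<Sum>i'\<in>I. w x * (Y i x * Y i' x))"
      by (rule sum.swap)
    also have "\<dots> = (\<Sum>i\<in>I. \<Sum>i'\<in>I. \<Sum>x\<in>S. w x * (Y i x * Y i' x))"
      by (intro sum.cong refl sum.swap)
    finally show ?thesis .
  qed
  also have "\<mu>\<^sup>2 = (\<Sum>i\<in>I. \<Sum>i'\<in>I. E i * E i')"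
  proof -
    have "\<mu> = (\<Sum>i\<in>I. E i)"
      unfolding \<mu>_def E_def Z_def by (simp add: sum_distrib_left sum.swap[of _ S])
    then show ?thesis by (simp add: power2_eq_square sum_product)
  qed
  finally have eq: "(\<Sum>x\<in>S. w x * (Z x - \<mu>)\<^sup>2) = (\<Sum>i\<in>I. \<Sum>i'\<in>I. \<Sum>x\<in>S. w x * (Y i x * Y i' x)) - (\<Sum>i\<in>I. \<Sum>i'\<in>I. E i * E i')" .
  from eq show ?thesis by (simp only: Z_def \<mu>_def E_def sum_subtractf)
qed

lemma GG_bound:
  assumes npos: "n > 0" and c: "c > 0" and ac: "\<alpha> \<ge> c" and e0: "e \<ge> 0" and e1: "e \<le> 1"
    and um: "u \<le> m"
  shows "GG n \<alpha> e u \<le> (1 + real m / c) ^ m * (1 / real n) ^ u"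
proof -
  have apos: "\<alpha> > 0" using c ac by simp
  define K where "K = 1 + real m / c"
  have K1: "K \<ge> 1" using c by (simp add: K_def)
  have fac: "(\<alpha> + e * real i) / (\<alpha> * real n + e * real i) \<le> K / real n" if "i < u" for i
  proof -
    have "(\<alpha> + e * real i) / (\<alpha> * real n + e * real i) \<le> (\<alpha> + e * real i) / (\<alpha> * real n)"
      using apos npos e0 by (intro divide_left_mono) (auto intro!: mult_pos_pos add_pos_nonneg add_nonneg_nonneg)
    also have "\<dots> = (1 + e * real i / \<alpha>) / real n" using apos npos by (simp add: field_simps)
    also have "\<dots> \<le> K / real n"
    proof -
      have "e * real i \<le> real m" using e1 e0 that um
      proof -
        have "e * real i \<le> 1 * real i" using e1 by (intro mult_right_mono) auto
        also have "\<dots> \<le> real m" using that um by simp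
        finally show ?thesis .
      qed
      then have "e * real i / \<alpha> \<le> real m / c"
        using apos c ac e0 by (intro frac_le) auto
      then show ?thesis using npos by (intro divide_right_mono) (auto simp: K_def)
    qed
    finally show ?thesis .
  qed
  have "GG n \<alpha> e u = (\<Prod>i<u. (\<alpha> + e * real i) / (\<alpha> * real n + e * real i))"
    by (simp add: GG_def gp_def prod_dividef)
  also have "\<dots> \<le> (\<Prod>i<u. K / real n)"
    using fac apos npos e0 by (intro prod_mono) (auto intro!: divide_nonneg_nonneg)
  also have "\<dots> = K ^ u * (1 / real n) ^ u" by (simp add: power_divide)
  also have "\<dots> \<le> K ^ m * (1 / real n) ^ u"
    using K1 um by (intro mult_right_mono power_increasing) auto
  finally show ?thesis by (simp add: K_def)
qed




lemma lsum_bound: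
  assumes npos: "n > 0"
  shows "finite T \<Longrightarrow> T \<subseteq> Pos n k \<Longrightarrow>
    (\<Sum>v\<in>Ls n k m. (1 / real n) ^ card (set v \<union> T))
      \<le> (real k + real (card T) + real m) ^ m * (1 / real n) ^ card T"
proof (induction m arbitrary: T)
  case 0
  have "Ls n k 0 = {[]}" by (auto simp: Ls_def)
  then show ?case by simp
next
  case (Suc m)
  define r where "r = 1 / real n"
  have r0: "r \<ge> 0" by (simp add: r_def)
  have nr: "real n * r = 1" using npos by (simp add: r_def)
  define C where "C = (real k + real (card T) + 1 + real m) ^ m"
  have C0: "C \<ge> 0" by (simp add: C_def)
  have "(\<Sum>v\<in>Ls n k (Suc m). r ^ card (set v \<union> T))
      = (\<Sum>x\<in>Pos n k. \<Sum>v\<in>Ls n k m. r ^ card (set v \<union> insert x T))"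
    unfolding Ls_def by (subst sum_lists_Suc) auto
  also have "\<dots> \<le> (\<Sum>x\<in>Pos n k. C * r ^ card (insert x T))"
  proof (intro sum_mono)
    fix x assume x: "x \<in> Pos n k"
    have "(\<Sum>v\<in>Ls n k m. r ^ card (set v \<union> insert x T))
        \<le> (real k + real (card (insert x T)) + real m) ^ m * r ^ card (insert x T)"
      using Suc.IH[of "insert x T"] Suc.prems x by (simp add: r_def)
    also have "\<dots> \<le> C * r ^ card (insert x T)"
      unfolding C_def
    proof (intro mult_right_mono power_mono)
      have "card (insert x T) \<le> card T + 1" by (simp add: card_insert_le_m1 card_insert_if)
      then show "real k + real (card (insert x T)) + real m \<le> real k + real (card T) + 1 + real m"
        by simp
    qed (use r0 in auto)
    finally show "(\<Sum>v\<in>Ls n k m. r ^ card (set v \<union> insert x T)) \<le> C * r ^ card (insert x T)"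
      by (simp add: C_def)
  qed
  also have "\<dots> = C * (\<Sum>x\<in>Pos n k. r ^ card (insert x T))" by (simp add: sum_distrib_left)
  also have "(\<Sum>x\<in>Pos n k. r ^ card (insert x T)) \<le> (real (card T) + real k) * r ^ card T"
  proof -
    have "(\<Sum>x\<in>Pos n k. r ^ card (insert x T))
        = (\<Sum>x\<in>Pos n k - T. r ^ card (insert x T)) + (\<Sum>x\<in>T. r ^ card (insert x T))"
      using Suc.prems by (intro sum.subset_diff) auto
    also have "(\<Sum>x\<in>T. r ^ card (insert x T)) = real (card T) * r ^ card T"
      by (simp add: insert_absorb)
    also have "(\<Sum>x\<in>Pos n k - T. r ^ card (insert x T)) = (\<Sum>x\<in>Pos n k - T. r * r ^ card T)"
      using Suc.prems by (intro sum.cong refl) auto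
    also have "\<dots> \<le> (\<Sum>x\<in>Pos n k. r * r ^ card T)"
      using r0 by (intro sum_mono2) auto
    also have "\<dots> = real k * r ^ card T"
      using nr by (simp add: card_Pos algebra_simps)
    finally show ?thesis by (simp add: algebra_simps)
  qed
  then have "C * (\<Sum>x\<in>Pos n k. r ^ card (insert x T)) \<le> C * ((real (card T) + real k) * r ^ card T)"
    using C0 by (intro mult_left_mono) auto
  also have "\<dots> \<le> (real k + real (card T) + real (Suc m)) ^ Suc m * r ^ card T"
  proof -
    have "C * (real (card T) + real k) \<le> (real k + real (card T) + real (Suc m)) ^ m * (real k + real (card T) + real (Suc m))"
      unfolding C_def by (intro mult_mono) (auto simp: add.assoc)
    then have "(C * (real (card T) + real k)) * r ^ card T \<le> ((real k + real (card T) + real (Suc m)) ^ m * (real k + real (card T) + real (Suc m))) * r ^ card T"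
      using r0 by (intro mult_right_mono) auto
    then show ?thesis by (simp only: mult.assoc power_Suc2)
  qed
  finally show ?case by (simp add: r_def)
qed




definition XX :: "nat \<Rightarrow> nat \<Rightarrow> nat \<Rightarrow> (nat \<times> nat \<Rightarrow> nat) \<Rightarrow> real" where
  "XX n k s M = (\<Sum>j<n. \<Sum>w\<in>Ls n k s. ind (set w) j M)"

lemma filter_compl:
  fixes f :: "'a \<Rightarrow> real"
  assumes "finite S"
  shows "sum f {x\<in>S. P x} = sum f S - sum f {x\<in>S. \<not> P x}"
proof -
  have "sum f S = sum f {x\<in>S. P x} + sum f {x\<in>S. \<not> P x}"
    using assms by (subst sum.union_disjoint[symmetric]) (auto intro: sum.cong)
  then show ?thesis by simp
qed

lemma cheb:
  fixes w Z :: "'a \<Rightarrow> real"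
  assumes S: "finite S" and w: "\<forall>x\<in>S. w x \<ge> 0" and T: "T > 0"
  shows "(\<Sum>x\<in>{x\<in>S. \<not> \<bar>Z x - \<mu>\<bar> < T}. w x) \<le> (\<Sum>x\<in>S. w x * (Z x - \<mu>)\<^sup>2) / T\<^sup>2"
proof -
  have "(\<Sum>x\<in>{x\<in>S. \<not> \<bar>Z x - \<mu>\<bar> < T}. w x) \<le> (\<Sum>x\<in>{x\<in>S. \<not> \<bar>Z x - \<mu>\<bar> < T}. w x * (Z x - \<mu>)\<^sup>2 / T\<^sup>2)"
  proof (intro sum_mono)
    fix x assume x: "x \<in> {x\<in>S. \<not> \<bar>Z x - \<mu>\<bar> < T}"
    then have "T\<^sup>2 \<le> (Z x - \<mu>)\<^sup>2" using T
      by (metis abs_ge_zero abs_le_square_iff less_imp_le mem_Collect_eq not_less abs_of_pos)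
    then have "1 \<le> (Z x - \<mu>)\<^sup>2 / T\<^sup>2" using T by simp
    then have "w x * 1 \<le> w x * ((Z x - \<mu>)\<^sup>2 / T\<^sup>2)" using w x by (intro mult_left_mono) auto
    then show "w x \<le> w x * (Z x - \<mu>)\<^sup>2 / T\<^sup>2" by simp
  qed
  also have "\<dots> \<le> (\<Sum>x\<in>S. w x * (Z x - \<mu>)\<^sup>2 / T\<^sup>2)"
    using S w by (intro sum_mono2) auto
  also have "\<dots> = (\<Sum>x\<in>S. w x * (Z x - \<mu>)\<^sup>2) / T\<^sup>2" by (simp add: sum_divide_distrib)
  finally show ?thesis .
qed

context
  fixes n k s :: nat and \<alpha> e c :: real
  assumes npos: "n > 0" and cpos: "c > 0" and ac: "\<alpha> \<ge> c" and e0: "e \<ge> 0" and e1: "e \<le> 1"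
begin

lemma apos: "\<alpha> > 0" using cpos ac by simp

definition Kc where "Kc = (1 + real (2 * s) / c) ^ (2 * s)"

lemma Kc_eq: "Kc = (1 + real (2 * s) / c) ^ (2 * s)" unfolding Kc_def ..

lemma Kc_nonneg: "Kc \<ge> 0" unfolding Kc_def using cpos by simp

lemma pair_sum:
  "(\<Sum>w\<in>Ls n k s. \<Sum>w'\<in>Ls n k s. (1 / real n) ^ card (set w' \<union> set w))
     \<le> (real k + real (2 * s)) ^ (2 * s)"
proof -
  have "(\<Sum>w\<in>Ls n k s. \<Sum>w'\<in>Ls n k s. (1 / real n) ^ card (set w' \<union> set w))
      \<le> (\<Sum>w\<in>Ls n k s. (real k + real (2 * s)) ^ s * (1 / real n) ^ card (set w \<union> {}))"
  proof (intro sum_mono)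
    fix w assume w: "w \<in> Ls n k s"
    have "(\<Sum>w'\<in>Ls n k s. (1 / real n) ^ card (set w' \<union> set w))
        \<le> (real k + real (card (set w)) + real s) ^ s * (1 / real n) ^ card (set w)"
      using w by (intro lsum_bound[OF npos]) (auto simp: Ls_def)
    also have "\<dots> \<le> (real k + real (2 * s)) ^ s * (1 / real n) ^ card (set w)"
    proof (intro mult_right_mono power_mono)
      have "card (set w) \<le> s" using w card_length[of w] by (auto simp: Ls_def)
      then show "real k + real (card (set w)) + real s \<le> real k + real (2 * s)" by simp
    qed auto
    finally show "(\<Sum>w'\<in>Ls n k s. (1 / real n) ^ card (set w' \<union> set w))
        \<le> (real k + real (2 * s)) ^ s * (1 / real n) ^ card (set w \<union> {})" by simp
  qed
  also have "\<dots> = (real k + real (2 * s)) ^ s * (\<Sum>w\<in>Ls n k s. (1 / real n) ^ card (set w \<union> {}))"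
    by (simp add: sum_distrib_left)
  also have "\<dots> \<le> (real k + real (2 * s)) ^ s * ((real k + real (card ({}::(nat\<times>nat) set)) + real s) ^ s * (1 / real n) ^ card ({}::(nat\<times>nat) set))"
    by (intro mult_left_mono lsum_bound[OF npos]) auto
  also have "\<dots> \<le> (real k + real (2 * s)) ^ s * (real k + real (2 * s)) ^ s"
  proof (intro mult_left_mono)
    show "(real k + real (card ({}::(nat\<times>nat) set)) + real s) ^ s * (1 / real n) ^ card ({}::(nat\<times>nat) set)
        \<le> (real k + real (2 * s)) ^ s"
    proof -
      have "real k + real s \<le> real k + real (2 * s)" by simp
      then have "(real k + real s)^s \<le> (real k + real (2 * s))^s" by (rule power_mono) simp
      then show ?thesis by simp
    qed
  qed simp
  also have "\<dots> = (real k + real (2 * s)) ^ (2 * s)"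
    by (metis mult_2 power_add)
  finally show ?thesis .
qed

lemma EY: "w \<in> Ls n k s \<Longrightarrow> j < n \<Longrightarrow>
   (\<Sum>M\<in>kout_maps n k. ww n k \<alpha> e M * ind (set w) j M) = GG n \<alpha> e (card (set w))"
  using E_ind[OF npos apos e0] single[OF npos apos e0, where A="set w" and j=j and k=k] by (simp add: Ls_def)

lemma var_bound:
  "(\<Sum>M\<in>kout_maps n k. ww n k \<alpha> e M * (XX n k s M - (\<Sum>M\<in>kout_maps n k. ww n k \<alpha> e M * XX n k s M))\<^sup>2)
    \<le> real n * (Kc * (real k + real (2 * s)) ^ (2 * s))"
proof -
  define I where "I = {..<n} \<times> Ls n k s"
  define Y where "Y i M = ind (set (snd i)) (fst i) M" for i M
  define H where "H (w::(nat\<times>nat) list) (w'::(nat\<times>nat) list) = Kc * (1 / real n) ^ card (set w' \<union> set w)" for w w'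
  have fI: "finite I" by (simp add: I_def)
  have XXY: "XX n k s M = (\<Sum>i\<in>I. Y i M)" for M
    unfolding XX_def I_def Y_def by (simp add: sum.cartesian_product case_prod_beta)
  have "(\<Sum>M\<in>kout_maps n k. ww n k \<alpha> e M * (XX n k s M - (\<Sum>M\<in>kout_maps n k. ww n k \<alpha> e M * XX n k s M))\<^sup>2)
      = (\<Sum>i\<in>I. \<Sum>i'\<in>I. (\<Sum>M\<in>kout_maps n k. ww n k \<alpha> e M * (Y i M * Y i' M))
               - (\<Sum>M\<in>kout_maps n k. ww n k \<alpha> e M * Y i M) * (\<Sum>M\<in>kout_maps n k. ww n k \<alpha> e M * Y i' M))"
    unfolding XXY by (rule var_expand[OF finite_KM fI total[OF npos apos e0]])
  also have "\<dots> \<le> (\<Sum>i\<in>I. \<Sum>i'\<in>I. if fst i = fst i' then H (snd i) (snd i') else 0)"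
  proof (intro sum_mono)
    fix i i' assume i: "i \<in> I" and i': "i' \<in> I"
    have A: "set (snd i) \<subseteq> Pos n k" "set (snd i') \<subseteq> Pos n k" "fst i < n" "fst i' < n"
      using i i' by (auto simp: I_def Ls_def)
    have cu: "card (set (snd i) \<union> set (snd i')) \<le> 2 * s"
    proof -
      have "card (set (snd i) \<union> set (snd i')) \<le> card (set (snd i)) + card (set (snd i'))"
        by (rule card_Un_le)
      also have "\<dots> \<le> length (snd i) + length (snd i')" by (intro add_mono card_length)
      also have "\<dots> = 2 * s" using i i' by (auto simp: I_def Ls_def)
      finally show ?thesis .
    qed
    have G: "GG n \<alpha> e (card (set (snd i) \<union> set (snd i'))) \<le> H (snd i) (snd i')"
      unfolding H_def Kc_def using GG_bound[OF npos cpos ac e0 e1 cu] by (simp add: Un_commute)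
    show "(\<Sum>M\<in>kout_maps n k. ww n k \<alpha> e M * (Y i M * Y i' M))
          - (\<Sum>M\<in>kout_maps n k. ww n k \<alpha> e M * Y i M) * (\<Sum>M\<in>kout_maps n k. ww n k \<alpha> e M * Y i' M)
          \<le> (if fst i = fst i' then H (snd i) (snd i') else 0)"
      using term_bound[OF npos apos e0 A] G unfolding Y_def by (auto split: if_splits)
  qed
  also have "\<dots> = (\<Sum>i\<in>I. \<Sum>w'\<in>Ls n k s. H (snd i) w')"
  proof (intro sum.cong refl)
    fix i assume i: "i \<in> I"
    have "(\<Sum>i'\<in>I. if fst i = fst i' then H (snd i) (snd i') else 0)
        = (\<Sum>j'<n. \<Sum>w'\<in>Ls n k s. if fst i = j' then H (snd i) w' else 0)"
      unfolding I_def by (simp add: sum.cartesian_product case_prod_beta)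
    also have "\<dots> = (\<Sum>w'\<in>Ls n k s. \<Sum>j'<n. if fst i = j' then H (snd i) w' else 0)"
      by (rule sum.swap)
    also have "\<dots> = (\<Sum>w'\<in>Ls n k s. H (snd i) w')"
      using i by (auto simp: I_def)
    finally show "(\<Sum>i'\<in>I. if fst i = fst i' then H (snd i) (snd i') else 0) = (\<Sum>w'\<in>Ls n k s. H (snd i) w')" .
  qed
  also have "\<dots> = (\<Sum>j<n. \<Sum>w\<in>Ls n k s. \<Sum>w'\<in>Ls n k s. H w w')"
    unfolding I_def sum.cartesian_product' by simp
  also have "\<dots> = real n * (Kc * (\<Sum>w\<in>Ls n k s. \<Sum>w'\<in>Ls n k s. (1 / real n) ^ card (set w' \<union> set w)))"
    by (simp add: H_def sum_distrib_left)
  also have "\<dots> \<le> real n * (Kc * (real k + real (2 * s)) ^ (2 * s))"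
    using pair_sum Kc_nonneg by (intro mult_left_mono) auto
  finally show ?thesis .
qed

lemma gen_conc:
  assumes T: "T > 0"
  shows "(\<Sum>M\<in>{M\<in>kout_maps n k. \<bar>(\<Sum>j<n. real (indeg n k M j) ^ s)
            - (\<Sum>M\<in>kout_maps n k. ww n k \<alpha> e M * real (indeg n k M 0) ^ s) * real n\<bar> < T}. ww n k \<alpha> e M)
        \<ge> 1 - real n * (Kc * (real k + real (2 * s)) ^ (2 * s)) / T\<^sup>2"
proof -
  define \<mu> where "\<mu> = (\<Sum>M\<in>kout_maps n k. ww n k \<alpha> e M * XX n k s M)"
  have X: "(\<Sum>j<n. real (indeg n k M j) ^ s) = XX n k s M" for M
    by (simp add: XX_def indeg_power)
  have EX: "\<mu> = real n * (\<Sum>w\<in>Ls n k s. GG n \<alpha> e (card (set w)))"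
  proof -
    have "\<mu> = (\<Sum>j<n. \<Sum>w\<in>Ls n k s. \<Sum>M\<in>kout_maps n k. ww n k \<alpha> e M * ind (set w) j M)"
      unfolding \<mu>_def XX_def
      by (simp add: sum_distrib_left sum.swap[of _ "kout_maps n k"])
    also have "\<dots> = (\<Sum>j<n. \<Sum>w\<in>Ls n k s. GG n \<alpha> e (card (set w)))"
      by (intro sum.cong refl) (simp add: EY)
    finally show ?thesis by simp
  qed
  have Emu: "(\<Sum>M\<in>kout_maps n k. ww n k \<alpha> e M * real (indeg n k M 0) ^ s) = (\<Sum>w\<in>Ls n k s. GG n \<alpha> e (card (set w)))"
  proof -
    have "(\<Sum>M\<in>kout_maps n k. ww n k \<alpha> e M * real (indeg n k M 0) ^ s)
        = (\<Sum>w\<in>Ls n k s. \<Sum>M\<in>kout_maps n k. ww n k \<alpha> e M * ind (set w) 0 M)"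
      by (simp add: indeg_power sum_distrib_left sum.swap[of _ "kout_maps n k"])
    also have "\<dots> = (\<Sum>w\<in>Ls n k s. GG n \<alpha> e (card (set w)))"
      using npos by (intro sum.cong refl) (simp add: EY)
    finally show ?thesis .
  qed
  have mu: "(\<Sum>M\<in>kout_maps n k. ww n k \<alpha> e M * real (indeg n k M 0) ^ s) * real n = \<mu>"
    using Emu EX by simp
  have eq: "(\<Sum>M\<in>{M\<in>kout_maps n k. \<bar>XX n k s M - \<mu>\<bar> < T}. ww n k \<alpha> e M)
      = 1 - (\<Sum>M\<in>{M\<in>kout_maps n k. \<not> \<bar>XX n k s M - \<mu>\<bar> < T}. ww n k \<alpha> e M)"
    by (subst filter_compl[OF finite_KM]) (simp add: total[OF npos apos e0])
  have b1: "(\<Sum>M\<in>{M\<in>kout_maps n k. \<not> \<bar>XX n k s M - \<mu>\<bar> < T}. ww n k \<alpha> e M)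
      \<le> (\<Sum>M\<in>kout_maps n k. ww n k \<alpha> e M * (XX n k s M - \<mu>)\<^sup>2) / T\<^sup>2"
    by (rule cheb[OF finite_KM _ T]) (use ww_nonneg[OF npos apos e0] in auto)
  have b2: "(\<Sum>M\<in>kout_maps n k. ww n k \<alpha> e M * (XX n k s M - \<mu>)\<^sup>2) / T\<^sup>2
      \<le> real n * (Kc * (real k + real (2 * s)) ^ (2 * s)) / T\<^sup>2"
    using var_bound T unfolding \<mu>_def by (intro divide_right_mono) auto
  show ?thesis unfolding X mu using eq b1 b2 by linarith
qed

end

lemma gen_conc2:
  assumes "n > 0" "c > 0" "c \<le> \<alpha>" "0 \<le> e" "e \<le> 1" "T > 0"
  shows "(\<Sum>M\<in>{M\<in>kout_maps n k. \<bar>(\<Sum>j<n. real (indeg n k M j) ^ s)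
            - (\<Sum>M\<in>kout_maps n k. ww n k \<alpha> e M * real (indeg n k M 0) ^ s) * real n\<bar> < T}. ww n k \<alpha> e M)
        \<ge> 1 - real n * ((1 + real (2 * s) / c) ^ (2 * s) * (real k + real (2 * s)) ^ (2 * s)) / T\<^sup>2"
  using gen_conc[OF assms, where s=s and k=k] by (simp add: Kc_eq[OF assms(1-5)])




lemma kw_eq: "kout_weight \<alpha> n k M = ww n k \<alpha> 1 M"
  unfolding kout_weight_def ww_def gp_def pochhammer_prod by (simp add: atLeast0LessThan)

lemma card_KM: "card (kout_maps n k) = n ^ (k * n)"
  by (simp add: KM_eq card_PiE card_Pos)

lemma ww_unif: "ww n k 1 0 M = 1 / real (card (kout_maps n k))"
  unfolding ww_def gp_def card_KM by simp

lemma KM_ne: "kout_maps n k \<noteq> {}"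
proof -
  have "(\<lambda>p. if p \<in> Pos n k then 0 else undefined) \<in> kout_maps n k \<or> n = 0"
    by (auto simp: KM_eq PiE_def Pi_def extensional_def)
  moreover have "n = 0 \<Longrightarrow> (\<lambda>_. undefined) \<in> kout_maps n k"
    by (auto simp: KM_eq Pos_def)
  ultimately show ?thesis by blast
qed

lemma prob_le1:
  assumes "n > 0" "\<alpha> > 0" "e \<ge> 0"
  shows "(\<Sum>M\<in>{M\<in>kout_maps n k. P M}. ww n k \<alpha> e M) \<le> 1"
proof -
  have "(\<Sum>M\<in>{M\<in>kout_maps n k. P M}. ww n k \<alpha> e M) \<le> (\<Sum>M\<in>kout_maps n k. ww n k \<alpha> e M)"
    using ww_nonneg[OF assms] by (intro sum_mono2) auto
  then show ?thesis using total[OF assms] by simp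
qed

lemma lim_aux:
  assumes om: "filterlim \<omega> at_top sequentially"
  shows "(\<lambda>n. 1 - C / (\<omega> n)\<^sup>2) \<longlonglongrightarrow> (1::real)"
proof -
  have "filterlim (\<lambda>n. (\<omega> n)\<^sup>2) at_top sequentially"
    using om unfolding power2_eq_square by (rule filterlim_at_top_mult_at_top[OF om])
  then have "filterlim (\<lambda>n. (\<omega> n)\<^sup>2) at_infinity sequentially"
    by (rule filterlim_mono) (auto simp: at_top_le_at_infinity)
  then have "(\<lambda>n. C / (\<omega> n)\<^sup>2) \<longlonglongrightarrow> 0"
    by (intro tendsto_divide_0[of _ C]) auto
  then show ?thesis using tendsto_diff[of "\<lambda>_. 1" 1 sequentially] by force
qed

lemma main_lim:
  fixes \<omega> :: "nat \<Rightarrow> real" and f :: "nat \<Rightarrow> real"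
  assumes om: "filterlim \<omega> at_top sequentially"
    and lo: "\<And>n. n > 0 \<Longrightarrow> \<omega> n > 0 \<Longrightarrow> f n \<ge> 1 - real n * C / (\<omega> n * sqrt (real n))\<^sup>2"
    and hi: "\<And>n. n > 0 \<Longrightarrow> f n \<le> 1"
  shows "f \<longlonglongrightarrow> 1"
proof (rule tendsto_sandwich[OF _ _ lim_aux[OF om, of C] tendsto_const])
  have ev: "eventually (\<lambda>n. n > 0 \<and> \<omega> n > 0) sequentially"
    using eventually_gt_at_top[of 0] om[unfolded filterlim_at_top_dense] by (auto intro: eventually_conj)
  show "eventually (\<lambda>n. 1 - C / (\<omega> n)\<^sup>2 \<le> f n) sequentially"
    using ev
  proof (rule eventually_mono)
    fix n assume n: "n > 0 \<and> \<omega> n > 0"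
    have "real n * C / (\<omega> n * sqrt (real n))\<^sup>2 = C / (\<omega> n)\<^sup>2"
      using n by (simp add: power_mult_distrib)
    then show "1 - C / (\<omega> n)\<^sup>2 \<le> f n" using lo[of n] n by simp
  qed
  show "eventually (\<lambda>n. f n \<le> 1) sequentially"
    using eventually_gt_at_top[of 0] by (rule eventually_mono) (use hi in auto)
qed

theorem corollary2:
  fixes k s :: nat and \<omega> :: "nat \<Rightarrow> real"
  assumes "filterlim \<omega> at_top sequentially"
  shows "(\<forall>\<alpha> :: nat \<Rightarrow> real. (\<forall>n. \<alpha> n > 0) \<and> (\<exists>c>0. \<forall>n. \<alpha> n \<ge> c) \<longrightarrow>
            ((\<lambda>n. prob_alpha (\<alpha> n) n k
               (\<lambda>M. \<bar>(\<Sum>j<n. real (indeg n k M j) ^ s) - mu_alpha (\<alpha> n) n k s * real n\<bar>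
                      < \<omega> n * sqrt (real n)))
             \<longlonglongrightarrow> 1))
       \<and> ((\<lambda>n. measure_pmf.prob (unif_kout n k)
               {M. \<bar>(\<Sum>j<n. real (indeg n k M j) ^ s) - mu_inf n k s * real n\<bar>
                      < \<omega> n * sqrt (real n)})
             \<longlonglongrightarrow> 1)"
proof (intro conjI allI impI)
  fix \<alpha> :: "nat \<Rightarrow> real"
  assume a: "(\<forall>n. \<alpha> n > 0) \<and> (\<exists>c>0. \<forall>n. \<alpha> n \<ge> c)"
  then obtain c where c: "c > 0" "\<forall>n. \<alpha> n \<ge> c" by blast
  define C where "C = (1 + real (2 * s) / c) ^ (2 * s) * (real k + real (2 * s)) ^ (2 * s)"
  have eqp: "prob_alpha (\<alpha> n) n k P = (\<Sum>M\<in>{M\<in>kout_maps n k. P M}. ww n k (\<alpha> n) 1 M)" for n P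
    by (simp add: prob_alpha_def kw_eq)
  have eqm: "mu_alpha (\<alpha> n) n k s = (\<Sum>M\<in>kout_maps n k. ww n k (\<alpha> n) 1 M * real (indeg n k M 0) ^ s)" for n
    by (simp add: mu_alpha_def kw_eq)
  show "(\<lambda>n. prob_alpha (\<alpha> n) n k
               (\<lambda>M. \<bar>(\<Sum>j<n. real (indeg n k M j) ^ s) - mu_alpha (\<alpha> n) n k s * real n\<bar>
                      < \<omega> n * sqrt (real n))) \<longlonglongrightarrow> 1"
  proof (rule main_lim[OF assms, where C=C])
    fix n :: nat assume n: "n > 0" "\<omega> n > 0"
    then have T: "\<omega> n * sqrt (real n) > 0" by simp
    show "1 - real n * C / (\<omega> n * sqrt (real n))\<^sup>2 \<le> prob_alpha (\<alpha> n) n k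
               (\<lambda>M. \<bar>(\<Sum>j<n. real (indeg n k M j) ^ s) - mu_alpha (\<alpha> n) n k s * real n\<bar>
                      < \<omega> n * sqrt (real n))"
      unfolding eqp eqm C_def using gen_conc2[OF n(1) c(1) _ _ _ T, where \<alpha>="\<alpha> n" and e=1 and k=k and s=s] c by simp
  next
    fix n :: nat assume n: "n > 0"
    show "prob_alpha (\<alpha> n) n k
               (\<lambda>M. \<bar>(\<Sum>j<n. real (indeg n k M j) ^ s) - mu_alpha (\<alpha> n) n k s * real n\<bar>
                      < \<omega> n * sqrt (real n)) \<le> 1"
      unfolding eqp using prob_le1[OF n] a by simp
  qed
next
  define C where "C = (1 + real (2 * s) / 1) ^ (2 * s) * (real k + real (2 * s)) ^ (2 * s)"
  have eqp: "measure_pmf.prob (unif_kout n k) {M. P M} = (\<Sum>M\<in>{M\<in>kout_maps n k. P M}. ww n k 1 0 M)" for n P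
  proof -
    have "measure_pmf.prob (unif_kout n k) {M. P M} = real (card (kout_maps n k \<inter> {M. P M})) / real (card (kout_maps n k))"
      unfolding unif_kout_def by (rule measure_pmf_of_set[OF KM_ne finite_KM])
    also have "\<dots> = (\<Sum>M\<in>{M\<in>kout_maps n k. P M}. ww n k 1 0 M)"
      by (simp add: ww_unif Int_def conj_commute)
    finally show ?thesis .
  qed
  have eqm: "mu_inf n k s = (\<Sum>M\<in>kout_maps n k. ww n k 1 0 M * real (indeg n k M 0) ^ s)" for n
  proof -
    have "mu_inf n k s = (\<Sum>M\<in>kout_maps n k. real (indeg n k M 0) ^ s) / real (card (kout_maps n k))"
      unfolding mu_inf_def unif_kout_def by (rule integral_pmf_of_set[OF KM_ne finite_KM])
    then show ?thesis by (simp add: ww_unif sum_divide_distrib)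
  qed
  show "(\<lambda>n. measure_pmf.prob (unif_kout n k)
               {M. \<bar>(\<Sum>j<n. real (indeg n k M j) ^ s) - mu_inf n k s * real n\<bar>
                      < \<omega> n * sqrt (real n)}) \<longlonglongrightarrow> 1"
  proof (rule main_lim[OF assms, where C=C])
    fix n :: nat assume n: "n > 0" "\<omega> n > 0"
    then have T: "\<omega> n * sqrt (real n) > 0" by simp
    show "1 - real n * C / (\<omega> n * sqrt (real n))\<^sup>2 \<le> measure_pmf.prob (unif_kout n k)
               {M. \<bar>(\<Sum>j<n. real (indeg n k M j) ^ s) - mu_inf n k s * real n\<bar>
                      < \<omega> n * sqrt (real n)}"
      unfolding eqp eqm C_def using gen_conc2[OF n(1) _ _ _ _ T, where c=1 and \<alpha>=1 and e=0 and k=k and s=s] by simp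
  next
    fix n :: nat assume n: "n > 0"
    show "measure_pmf.prob (unif_kout n k)
               {M. \<bar>(\<Sum>j<n. real (indeg n k M j) ^ s) - mu_inf n k s * real n\<bar>
                      < \<omega> n * sqrt (real n)} \<le> 1"
      unfolding eqp using prob_le1[OF n] by simp
  qed
qed



end
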